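(* Assume $V_n^2$ is positive definite and let $$C_{V,f}^2=nh^d\sup_{t\in[-1,1]^d}K(t)^2\,\Psi(t)^\top V_n^{-2}\Psi(t).$$ Let $\boldsymbol\zeta=\nabla L(\theta^* )-\mathbf E\nabla L(\theta^* )$ and $M(\lambda,\gamma)=\log\mathbf E\exp(\lambda\gamma^\top V_n^{-1}\boldsymbol\zeta)$. Then for every $\mathfrak g>0$, every unit vector $\gamma\in\mathbb R^p$ and every $\lambda$ with $|\lambda|\le\mathfrak g$, $$M(\lambda,\gamma)\le\frac{\nu_0^2\lambda^2}{2},\qquad \nu_0^2=p+\frac{16\,\mathfrak g\,C_{V,f}^3}{\sqrt{nh^{3d}}}.$$
   Context: Fix integers $d,p\ge1$, $n\ge1$, $h>0$, $x_0\in\mathbb R^d$. Let $X_1,\dots,X_n$ be i.i.d. in $\mathbb R^d$ with Lebesgue density $f$. Let $K:\mathbb R^d\to[0,\infty)$ be a bounded measurable kernel vanishing outside $[-1,1]^d$, and $\psi_0\equiv1,\psi_1,\dots,\psi_{p-1}$ bounded measurable functions on $[-1,1]^d$; $\Psi(t)=(\psi_0(t),\dots,\psi_{p-1}(t))^\top$. With $T_i=(X_i-x_0)/h$, the local log-likelihood is $L(\theta)=\sum_{i=1}^nK(T_i)\Psi(T_i)^\top\theta-nh^d\int K(t)e^{\Psi(t)^\top\theta}dt$; $\theta^*$ is any fixed parameter (e.g. $\arg\max\mathbf EL$). Note $\nabla L(\theta)-\mathbf E\nabla L(\theta)=\sum_{i=1}^n\big(K(T_i)\Psi(T_i)-\mathbf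 EK(T_i)\Psi(T_i)\big)$ does not depend on $\theta$. $V_n^2=\mathrm{Var}(\nabla L(\theta^* ))$ and $V_n^{-1}$ is the inverse of its symmetric positive definite square root. *)

theory Defs
  imports "HOL-Probability.Probability"
begin

definition unit_cube :: "(real ^ 'd) set" where
  "unit_cube = cbox (- One) One"

definition symmetric_mat :: "real ^ 'n ^ 'n \<Rightarrow> bool" where
  "symmetric_mat A \<longleftrightarrow> transpose A = A"

definition pos_def_mat :: "real ^ 'n ^ 'n \<Rightarrow> bool" where
  "pos_def_mat A \<longleftrightarrow> symmetric_mat A \<and> (\<forall>x. x \<noteq> 0 \<longrightarrow> x \<bullet> (A *v x) > 0)"

definition cov_mat :: "'a measure \<Rightarrow> ('a \<Rightarrow> real ^ 'p) \<Rightarrow> real ^ 'p ^ 'p" where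
  "cov_mat M Z = (\<chi> i j. integral\<^sup>L M (\<lambda>\<omega>.
      (Z \<omega> $ i - integral\<^sup>L M (\<lambda>\<omega>'. Z \<omega>' $ i)) * (Z \<omega> $ j - integral\<^sup>L M (\<lambda>\<omega>'. Z \<omega>' $ j))))"

text \<open>Centered score: zeta = grad L(theta) - E grad L(theta) (independent of theta).\<close>
definition score_centered ::
  "'a measure \<Rightarrow> nat \<Rightarrow> real \<Rightarrow> real ^ 'd \<Rightarrow> (real ^ 'd \<Rightarrow> real) \<Rightarrow> (real ^ 'd \<Rightarrow> real ^ 'p)
    \<Rightarrow> (nat \<Rightarrow> 'a \<Rightarrow> real ^ 'd) \<Rightarrow> 'a \<Rightarrow> real ^ 'p" where
  "score_centered M n h x0 K \<Psi> X \<omega> =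
     (\<Sum>i<n. K ((1/h) *\<^sub>R (X i \<omega> - x0)) *\<^sub>R \<Psi> ((1/h) *\<^sub>R (X i \<omega> - x0))
        - integral\<^sup>L M (\<lambda>\<omega>'. K ((1/h) *\<^sub>R (X i \<omega>' - x0)) *\<^sub>R \<Psi> ((1/h) *\<^sub>R (X i \<omega>' - x0))))"

end

theory Submission
  imports Defs
begin



lemma exp_cubic:
  fixes x :: real assumes "\<bar>x\<bar> \<le> 1"
  shows "exp x \<le> 1 + x + x\<^sup>2 / 2 + \<bar>x\<bar> ^ 3 / 2"
proof -
  obtain t where t: "\<bar>t\<bar> \<le> \<bar>x\<bar>" "exp x = (\<Sum>m<3. (x ^ m) / fact m) + (exp t / fact 3) * x ^ 3"
    using Maclaurin_exp_le[of x 3] by blast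
  have s: "(\<Sum>m<3. (x ^ m) / fact m) = 1 + x + x\<^sup>2/2"
    by (simp add: numeral_3_eq_3 power2_eq_square eval_nat_numeral)
  have f: "(fact 3::real) = 6" by (simp add: eval_nat_numeral)
  have e: "exp t \<le> 3" using t(1) assms exp_le by (smt (verit) exp_le_cancel_iff)
  have "(exp t / 6) * x ^ 3 \<le> (exp t / 6) * \<bar>x\<bar> ^ 3"
    by (intro mult_left_mono) (auto simp: power_abs[symmetric])
  also have "\<dots> \<le> (3/6) * \<bar>x\<bar>^3" by (intro mult_right_mono) (use e in auto)
  finally show ?thesis using t(2) s f by simp
qed

lemma posdef_inv:
  fixes S :: "real ^ 'p ^ 'p"
  assumes "pos_def_mat S"
  shows "S ** matrix_inv S = mat 1" "matrix_inv S ** S = mat 1" "transpose (matrix_inv S) = matrix_inv S"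
    "transpose S = S"
proof -
  have ker: "\<forall>x. S *v x = 0 \<longrightarrow> x = 0"
  proof (intro allI impI)
    fix x assume "S *v x = 0"
    then have "x \<bullet> (S *v x) = 0" by simp
    then show "x = 0" using assms unfolding pos_def_mat_def by force
  qed
  then have "invertible S" using matrix_left_invertible_ker invertible_left_inverse by blast
  then have ex: "\<exists>A'. S ** A' = mat 1 \<and> A' ** S = mat 1" by (simp add: invertible_def)
  show 1: "S ** matrix_inv S = mat 1" "matrix_inv S ** S = mat 1"
    using someI_ex[OF ex] unfolding matrix_inv_def by auto
  show tS: "transpose S = S" using assms unfolding pos_def_mat_def symmetric_mat_def by auto
  have "transpose (matrix_inv S) ** S = mat 1"
    using arg_cong[OF 1(1), of transpose] by (simp add: matrix_transpose_mul tS)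
  then have "transpose (matrix_inv S) = transpose (matrix_inv S) ** (S ** matrix_inv S)"
    using 1 by (simp add: matrix_mul_rid)
  also have "\<dots> = matrix_inv S" by (simp add: matrix_mul_assoc \<open>transpose (matrix_inv S) ** S = mat 1\<close> matrix_mul_lid)
  finally show "transpose (matrix_inv S) = matrix_inv S" .
qed




lemma (in prob_space) mgf_bound:
  fixes Z :: "nat \<Rightarrow> 'a \<Rightarrow> real"
  assumes indep: "indep_vars (\<lambda>_. borel) Z {..<n}"
    and bnd: "\<And>i \<omega>. i < n \<Longrightarrow> \<bar>Z i \<omega>\<bar> \<le> 2 * b0"
    and mean: "\<And>i. i < n \<Longrightarrow> expectation (Z i) = 0"
    and var: "(\<Sum>i<n. expectation (\<lambda>\<omega>. (Z i \<omega>)\<^sup>2)) \<le> 1"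
    and b0: "b0 \<ge> 0" and lg: "\<bar>lam\<bar> \<le> g" and p: "1 \<le> p"
  shows "ln (expectation (\<lambda>\<omega>. exp (lam * (\<Sum>i<n. Z i \<omega>)))) \<le> (p + 16 * g * (n * b0 ^ 3)) * lam\<^sup>2 / 2"
proof -
  have rv: "\<And>i. i < n \<Longrightarrow> Z i \<in> borel_measurable M"
    using indep unfolding indep_vars_def by auto
  have intZ: "\<And>i. i < n \<Longrightarrow> integrable M (Z i)"
    using rv bnd by (intro integrable_const_bound[where B="2*b0"]) auto
  have intZ2: "\<And>i. i < n \<Longrightarrow> integrable M (\<lambda>\<omega>. (Z i \<omega>)\<^sup>2)"
  proof -
    fix i assume i: "i < n"
    have "\<bar>(Z i \<omega>)\<^sup>2\<bar> \<le> (2*b0)\<^sup>2" for \<omega>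
      using power_mono[OF bnd[OF i, of \<omega>] abs_ge_zero, of 2] by simp
    then show "integrable M (\<lambda>\<omega>. (Z i \<omega>)\<^sup>2)"
      using rv[OF i] by (intro integrable_const_bound[where B="(2*b0)\<^sup>2"]) auto
  qed
  define E where "E i = expectation (\<lambda>\<omega>. exp (lam * Z i \<omega>))" for i
  have expbnd: "\<bar>lam * Z i \<omega>\<bar> \<le> \<bar>lam\<bar> * (2*b0)" if "i < n" for i \<omega>
    using bnd[OF that] by (simp add: abs_mult mult_left_mono)
  have intE: "integrable M (\<lambda>\<omega>. exp (lam * Z i \<omega>))" if i: "i < n" for i
  proof -
    have "norm (exp (lam * Z i \<omega>)) \<le> exp (\<bar>lam\<bar> * (2*b0))" for \<omega>
      using expbnd[OF i, of \<omega>] by simp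
    then show ?thesis using rv[OF i] by (intro integrable_const_bound[where B="exp (\<bar>lam\<bar> * (2*b0))"]) auto
  qed
  have Epos: "0 < E i" if i: "i < n" for i
  proof -
    have "exp (- (\<bar>lam\<bar> * (2*b0))) \<le> exp (lam * Z i \<omega>)" for \<omega>
      using expbnd[OF i, of \<omega>] by simp
    then have "expectation (\<lambda>_. exp (- (\<bar>lam\<bar> * (2*b0)))) \<le> E i"
      unfolding E_def by (intro integral_mono intE i) auto
    then show ?thesis by (simp add: prob_space) (smt (verit) exp_gt_zero)
  qed
  have prodE: "expectation (\<lambda>\<omega>. exp (lam * (\<Sum>i<n. Z i \<omega>))) = (\<Prod>i<n. E i)"
  proof -
    have "expectation (\<lambda>\<omega>. exp (lam * (\<Sum>i<n. Z i \<omega>))) = expectation (\<lambda>\<omega>. \<Prod>i<n. exp (lam * Z i \<omega>))"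
      by (simp add: sum_distrib_left exp_sum)
    also have "\<dots> = (\<Prod>i<n. E i)" unfolding E_def
      by (rule indep_vars_lebesgue_integral) (auto intro!: indep_vars_compose2[OF indep] intE)
    finally show ?thesis .
  qed
  show ?thesis
  proof (cases "\<bar>lam\<bar> * (2*b0) \<le> 1")
    case True
    define a where "a i = lam\<^sup>2 * expectation (\<lambda>\<omega>. (Z i \<omega>)\<^sup>2) / 2 + 4 * \<bar>lam\<bar>^3 * b0^3" for i
    have Ea: "E i \<le> exp (a i)" if i: "i < n" for i
    proof -
      have pw: "exp (lam * Z i \<omega>) \<le> 1 + lam * Z i \<omega> + lam\<^sup>2/2 * (Z i \<omega>)\<^sup>2 + 4 * \<bar>lam\<bar>^3 * b0^3" for \<omega>
      proof -
        have x1: "\<bar>lam * Z i \<omega>\<bar> \<le> 1" using expbnd[OF i, of \<omega>] True by linarith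
        have "\<bar>lam * Z i \<omega>\<bar>^3 \<le> (\<bar>lam\<bar> * (2*b0))^3"
          by (intro power_mono expbnd i) auto
        then have "\<bar>lam * Z i \<omega>\<bar>^3 / 2 \<le> 4 * \<bar>lam\<bar>^3 * b0^3" by (simp add: power_mult_distrib)
        then show ?thesis using exp_cubic[OF x1] by (simp add: power_mult_distrib)
      qed
      have "E i \<le> expectation (\<lambda>\<omega>. 1 + lam * Z i \<omega> + lam\<^sup>2/2 * (Z i \<omega>)\<^sup>2 + 4 * \<bar>lam\<bar>^3 * b0^3)"
        unfolding E_def using pw intE[OF i] intZ[OF i] intZ2[OF i] by (intro integral_mono) auto
      also have "\<dots> = 1 + a i"
        using intZ[OF i] intZ2[OF i] mean[OF i]
        by (simp add: a_def prob_space)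
      also have "\<dots> \<le> exp (a i)" by (rule exp_ge_add_one_self)
      finally show ?thesis .
    qed
    have "(\<Prod>i<n. E i) \<le> (\<Prod>i<n. exp (a i))"
      by (intro prod_mono) (use Ea Epos in \<open>auto intro: less_imp_le\<close>)
    also have "\<dots> = exp (\<Sum>i<n. a i)" by (simp add: exp_sum)
    finally have le: "(\<Prod>i<n. E i) \<le> exp (\<Sum>i<n. a i)" .
    have pos: "0 < (\<Prod>i<n. E i)" by (rule prod_pos) (use Epos in auto)
    have "ln (\<Prod>i<n. E i) \<le> (\<Sum>i<n. a i)"
      using le pos by (metis exp_gt_zero ln_exp ln_le_cancel_iff)
    also have "(\<Sum>i<n. a i) = lam\<^sup>2 / 2 * (\<Sum>i<n. expectation (\<lambda>\<omega>. (Z i \<omega>)\<^sup>2)) + n * (4 * \<bar>lam\<bar>^3 * b0^3)"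
      by (simp add: a_def sum.distrib sum_divide_distrib sum_distrib_left)
    also have "\<dots> \<le> lam\<^sup>2 / 2 * p + n * (8 * g * lam\<^sup>2 * b0^3)"
    proof (intro add_mono mult_left_mono)
      show "(\<Sum>i<n. expectation (\<lambda>\<omega>. (Z i \<omega>)\<^sup>2)) \<le> p" using var p by linarith
      have l3: "\<bar>lam\<bar>^3 = \<bar>lam\<bar> * lam\<^sup>2" by (simp add: eval_nat_numeral)
      have "\<bar>lam\<bar> * lam\<^sup>2 \<le> g * lam\<^sup>2" using lg by (intro mult_right_mono) auto
      then have c: "\<bar>lam\<bar>^3 \<le> g * lam\<^sup>2" using l3 by simp
      have g0: "0 \<le> g * lam\<^sup>2" using lg by simp
      have "4 * b0^3 * \<bar>lam\<bar>^3 \<le> 4 * b0^3 * (g * lam\<^sup>2)" using b0 c by (intro mult_left_mono) auto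
      also have "\<dots> \<le> 8 * b0^3 * (g * lam\<^sup>2)" using b0 g0 by (intro mult_right_mono) auto
      finally show "4 * \<bar>lam\<bar>^3 * b0^3 \<le> 8 * g * lam\<^sup>2 * b0^3" by (simp add: algebra_simps)
    qed auto
    also have "\<dots> = (p + 16 * g * (n * b0 ^ 3)) * lam\<^sup>2 / 2" by (simp add: algebra_simps)
    finally show ?thesis using prodE by simp
  next
    case False
    have Ea: "E i \<le> exp (\<bar>lam\<bar> * (2*b0))" if i: "i < n" for i
    proof -
      have "exp (lam * Z i \<omega>) \<le> exp (\<bar>lam\<bar> * (2*b0))" for \<omega>
        using expbnd[OF i, of \<omega>] by simp
      then have "E i \<le> expectation (\<lambda>_. exp (\<bar>lam\<bar> * (2*b0)))"
        unfolding E_def by (intro integral_mono intE i) auto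
      then show ?thesis by (simp add: prob_space)
    qed
    have "(\<Prod>i<n. E i) \<le> (\<Prod>i<n. exp (\<bar>lam\<bar> * (2*b0)))"
      by (intro prod_mono) (use Ea Epos in \<open>auto intro: less_imp_le\<close>)
    also have "\<dots> = exp (\<Sum>i<n. \<bar>lam\<bar> * (2*b0))" by (rule exp_sum[symmetric]) simp
    finally have le: "(\<Prod>i<n. E i) \<le> exp (\<Sum>i<n. \<bar>lam\<bar> * (2*b0))" .
    have pos: "0 < (\<Prod>i<n. E i)" by (rule prod_pos) (use Epos in auto)
    have "ln (\<Prod>i<n. E i) \<le> (\<Sum>i<n. \<bar>lam\<bar> * (2*b0))"
      using le pos by (metis exp_gt_zero ln_exp ln_le_cancel_iff)
    also have "\<dots> = n * (\<bar>lam\<bar> * (2*b0))" by simp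
    also have "\<dots> \<le> n * (8 * g * lam\<^sup>2 * b0^3)"
    proof (intro mult_left_mono)
      define x where "x = \<bar>lam\<bar> * (2*b0)"
      have x1: "1 < x" using False x_def by simp
      have "1 \<le> x * x" using x1 less_1_mult[OF x1 x1] by simp
      then have "x * 1 \<le> x * x\<^sup>2" using x1 by (intro mult_left_mono) (auto simp: power2_eq_square)
      then have "\<bar>lam\<bar> * (2*b0) \<le> (\<bar>lam\<bar> * (2*b0)) * (\<bar>lam\<bar> * (2*b0))\<^sup>2"
        by (simp add: x_def)
      also have "\<dots> = 8 * \<bar>lam\<bar> * lam\<^sup>2 * b0^3" by (simp add: power2_eq_square power3_eq_cube algebra_simps)
      also have "\<dots> \<le> 8 * g * lam\<^sup>2 * b0^3" using lg b0 by (intro mult_right_mono) auto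
      finally show "\<bar>lam\<bar> * (2*b0) \<le> 8 * g * lam\<^sup>2 * b0^3" .
    qed auto
    also have "\<dots> \<le> (p + 16 * g * (n * b0 ^ 3)) * lam\<^sup>2 / 2"
      using p by (simp add: algebra_simps)
    finally show ?thesis using prodE by simp
  qed
qed




lemma (in prob_space) var_sum:
  fixes Z :: "nat \<Rightarrow> 'a \<Rightarrow> real"
  assumes indep: "indep_vars (\<lambda>_. borel) Z {..<n}"
    and bnd: "\<And>i \<omega>. i < n \<Longrightarrow> \<bar>Z i \<omega>\<bar> \<le> B"
    and mean: "\<And>i. i < n \<Longrightarrow> expectation (Z i) = 0"
  shows "expectation (\<lambda>\<omega>. (\<Sum>i<n. Z i \<omega>)\<^sup>2) = (\<Sum>i<n. expectation (\<lambda>\<omega>. (Z i \<omega>)\<^sup>2))"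
proof -
  have rv: "\<And>i. i < n \<Longrightarrow> Z i \<in> borel_measurable M"
    using indep unfolding indep_vars_def by auto
  have intZ: "\<And>i. i < n \<Longrightarrow> integrable M (Z i)"
    using rv bnd by (intro integrable_const_bound[where B="B"]) auto
  have int2: "integrable M (\<lambda>\<omega>. Z i \<omega> * Z j \<omega>)" if "i < n" "j < n" for i j
  proof -
    have "\<bar>Z i \<omega> * Z j \<omega>\<bar> \<le> B * B" for \<omega>
      unfolding abs_mult by (intro mult_mono bnd that) (use bnd that in \<open>auto intro: order_trans[OF abs_ge_zero]\<close>)
    then show ?thesis using rv that by (intro integrable_const_bound[where B="B*B"]) auto
  qed
  have cross: "expectation (\<lambda>\<omega>. Z i \<omega> * Z j \<omega>) = (if i = j then expectation (\<lambda>\<omega>. (Z i \<omega>)\<^sup>2) else 0)"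
    if "i < n" "j < n" for i j
  proof (cases "i = j")
    case True then show ?thesis by (simp add: power2_eq_square)
  next
    case False
    have ind2: "indep_vars (\<lambda>_. borel) Z {i, j}"
      by (rule indep_vars_subset[OF indep]) (use that in auto)
    have "expectation (\<lambda>\<omega>. \<Prod>k\<in>{i,j}. Z k \<omega>) = (\<Prod>k\<in>{i,j}. expectation (Z k))"
      by (rule indep_vars_lebesgue_integral[OF _ ind2]) (use that intZ in auto)
    then show ?thesis using False mean that by simp
  qed
  have "expectation (\<lambda>\<omega>. (\<Sum>i<n. Z i \<omega>)\<^sup>2) = expectation (\<lambda>\<omega>. \<Sum>i<n. \<Sum>j<n. Z i \<omega> * Z j \<omega>)"
    by (simp add: power2_eq_square sum_product)
  also have "\<dots> = (\<Sum>i<n. \<Sum>j<n. expectation (\<lambda>\<omega>. Z i \<omega> * Z j \<omega>))"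
  proof -
    have "expectation (\<lambda>\<omega>. \<Sum>i<n. \<Sum>j<n. Z i \<omega> * Z j \<omega>) = (\<Sum>i<n. expectation (\<lambda>\<omega>. \<Sum>j<n. Z i \<omega> * Z j \<omega>))"
      by (rule Bochner_Integration.integral_sum[where I="{..<n}" and f="\<lambda>i \<omega>. \<Sum>j<n. Z i \<omega> * Z j \<omega>"]) (use int2 in auto)
    also have "\<dots> = (\<Sum>i<n. \<Sum>j<n. expectation (\<lambda>\<omega>. Z i \<omega> * Z j \<omega>))"
      by (intro sum.cong refl Bochner_Integration.integral_sum[where I="{..<n}"]) (use int2 in auto)
    finally show ?thesis .
  qed
  also have "\<dots> = (\<Sum>i<n. \<Sum>j<n. (if i = j then expectation (\<lambda>\<omega>. (Z i \<omega>)\<^sup>2) else 0))"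
    using cross by (intro sum.cong) auto
  also have "\<dots> = (\<Sum>i<n. expectation (\<lambda>\<omega>. (Z i \<omega>)\<^sup>2))"
    by (simp add: sum.delta)
  finally show ?thesis .
qed




lemma (in prob_space) abs_expectation_le:
  fixes f :: "'a \<Rightarrow> real"
  assumes "f \<in> borel_measurable M" "\<And>\<omega>. \<bar>f \<omega>\<bar> \<le> B"
  shows "\<bar>expectation f\<bar> \<le> B"
proof -
  have int: "integrable M f" using assms by (intro integrable_const_bound[where B=B]) auto
  have "\<bar>expectation f\<bar> \<le> expectation (\<lambda>\<omega>. \<bar>f \<omega>\<bar>)"
    using integral_norm_bound[of M f] by simp
  also have "\<dots> \<le> expectation (\<lambda>_. B)"
    using int assms(2) by (intro integral_mono) auto
  finally show ?thesis by (simp add: prob_space)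
qed

lemma zero_in_cube: "(0::real^'d) \<in> unit_cube"
  by (auto simp: unit_cube_def mem_box)

theorem lemma4:
  fixes M :: "'a measure"
    and X :: "nat \<Rightarrow> 'a \<Rightarrow> real ^ 'd"
    and f :: "real ^ 'd \<Rightarrow> ennreal"
    and K :: "real ^ 'd \<Rightarrow> real"
    and \<Psi> :: "real ^ 'd \<Rightarrow> real ^ 'p"
    and i0 :: 'p
    and n :: nat and h :: real and x0 :: "real ^ 'd"
    and S :: "real ^ 'p ^ 'p"
    and g lam :: real and \<gamma> :: "real ^ 'p"
  assumes "prob_space M"
    and "n \<ge> 1" and "h > 0"
    and "prob_space.indep_vars M (\<lambda>_. borel) X {..<n}"
    and "\<And>i. i < n \<Longrightarrow> distributed M lborel (X i) f"
    and "K \<in> borel_measurable borel"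
    and "\<And>t. K t \<ge> 0"
    and "\<exists>B. \<forall>t. K t \<le> B"
    and "\<And>t. t \<notin> unit_cube \<Longrightarrow> K t = 0"
    and "\<Psi> \<in> borel_measurable (restrict_space borel unit_cube)"
    and "\<exists>B. \<forall>t\<in>unit_cube. norm (\<Psi> t) \<le> B"
    and "\<And>t. t \<in> unit_cube \<Longrightarrow> \<Psi> t $ i0 = 1"
    and "pos_def_mat (cov_mat M (score_centered M n h x0 K \<Psi> X))"
    and "pos_def_mat S"
    and "S ** S = cov_mat M (score_centered M n h x0 K \<Psi> X)"
    and "g > 0" and "norm \<gamma> = 1" and "\<bar>lam\<bar> \<le> g"
  shows "ln (integral\<^sup>L M (\<lambda>\<omega>. exp (lam * (\<gamma> \<bullet> (matrix_inv S *v score_centered M n h x0 K \<Psi> X \<omega>)))))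
    \<le> (real CARD('p) + 16 * g
          * (sqrt (real n * h ^ CARD('d) * (SUP t\<in>unit_cube. (K t)\<^sup>2 * (\<Psi> t \<bullet> ((matrix_inv S ** matrix_inv S) *v \<Psi> t))))) ^ 3
          / sqrt (real n * h ^ (3 * CARD('d)))) * lam\<^sup>2 / 2"


proof -
  interpret prob_space M by fact
  define A where "A = matrix_inv S"
  define \<zeta> where "\<zeta> = score_centered M n h x0 K \<Psi> X"
  define \<phi> where "\<phi> t = K t *\<^sub>R \<Psi> t" for t
  define T where "T i \<omega> = (1/h) *\<^sub>R (X i \<omega> - x0)" for i \<omega>
  define w where "w = A *v \<gamma>"
  define q where "q t = (K t)\<^sup>2 * (\<Psi> t \<bullet> ((A ** A) *v \<Psi> t))" for t
  define s where "s = (SUP t\<in>unit_cube. q t)"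
  define b0 where "b0 = sqrt s"
  have SA: "S ** A = mat 1" "A ** S = mat 1" "transpose A = A" "transpose S = S"
    using posdef_inv[OF assms(14)] unfolding A_def by auto
  have trA: "x v* A = A *v x" for x
    by (metis SA(3) transpose_matrix_vector)
  have trS: "x v* S = S *v x" for x
    by (metis SA(4) transpose_matrix_vector)
  have gA: "\<gamma> \<bullet> (A *v v) = w \<bullet> v" for v
    unfolding w_def by (metis dot_lmul_matrix trA)
  have cube_closed: "closed (unit_cube :: (real^'d) set)" unfolding unit_cube_def by (rule closed_cbox)
  have phi_eq: "\<phi> = (\<lambda>t. if t \<in> unit_cube then K t *\<^sub>R \<Psi> t else 0)"
    using assms(9) by (auto simp: \<phi>_def fun_eq_iff)
  have phi_meas[measurable]: "\<phi> \<in> borel_measurable borel"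
  proof -
    have Km: "K \<in> borel_measurable (restrict_space borel unit_cube)"
      using assms(6) by (rule measurable_restrict_space1)
    have "(\<lambda>t. K t *\<^sub>R \<Psi> t) \<in> borel_measurable (restrict_space borel {t. t \<in> unit_cube})"
      using borel_measurable_scaleR[OF Km assms(10)] by simp
    moreover have "{x \<in> space borel. x \<in> (unit_cube :: (real^'d) set)} \<in> sets borel"
      using cube_closed by (simp add: borel_closed[OF cube_closed])
    ultimately show ?thesis unfolding phi_eq
      by (subst measurable_If_restrict_space_iff) auto
  qed
  obtain BK where BK: "\<And>t. K t \<le> BK" using assms(8) by blast
  obtain BP where BP: "\<And>t. t \<in> unit_cube \<Longrightarrow> norm (\<Psi> t) \<le> BP" using assms(11) by blast
  have BK0: "0 \<le> BK" using BK[of 0] assms(7)[of 0] by linarith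
  have phi_bnd: "norm (\<phi> t) \<le> BK * BP" for t
  proof (cases "t \<in> unit_cube")
    case True
    have "norm (\<phi> t) = K t * norm (\<Psi> t)" using assms(7)[of t] by (simp add: \<phi>_def)
    also have "\<dots> \<le> BK * BP" using BK[of t] BP[OF True] assms(7)[of t] by (intro mult_mono) auto
    finally show ?thesis .
  next
    case False
    then show ?thesis using BK0 BP[OF zero_in_cube] assms(9)[OF False] norm_ge_zero[of "\<Psi> 0"] by (simp add: \<phi>_def) (meson norm_ge_zero order_trans mult_nonneg_nonneg)
  qed
  have Xm[measurable]: "\<And>i. i < n \<Longrightarrow> X i \<in> borel_measurable M"
    using assms(4) unfolding indep_vars_def by auto

  have PT_meas[measurable]: "(\<lambda>\<omega>. \<phi> (T i \<omega>)) \<in> borel_measurable M" if "i < n" for i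
    using Xm[OF that] unfolding T_def by measurable
  have PT_int: "integrable M (\<lambda>\<omega>. \<phi> (T i \<omega>))" if "i < n" for i
    using PT_meas[OF that] phi_bnd by (intro integrable_const_bound[where B="BK*BP"]) auto
  have zeta_eq: "\<zeta> \<omega> = (\<Sum>i<n. \<phi> (T i \<omega>) - expectation (\<lambda>\<omega>'. \<phi> (T i \<omega>')))" for \<omega>
    unfolding \<zeta>_def score_centered_def \<phi>_def T_def ..
  have uzeta: "u \<bullet> \<zeta> \<omega> = (\<Sum>i<n. u \<bullet> \<phi> (T i \<omega>) - expectation (\<lambda>\<omega>'. u \<bullet> \<phi> (T i \<omega>')))" for u \<omega>
    unfolding zeta_eq inner_sum_right inner_diff_right
    by (intro sum.cong refl arg_cong2[where f="(-)"] integral_inner_right[symmetric]) (use PT_int in auto)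
  have uPT_meas[measurable]: "(\<lambda>\<omega>. u \<bullet> \<phi> (T i \<omega>)) \<in> borel_measurable M" if "i < n" for i u
    using PT_meas[OF that] by measurable
  have uPT_bnd: "\<bar>u \<bullet> \<phi> (T i \<omega>)\<bar> \<le> norm u * (BK * BP)" for u i \<omega>
    using Cauchy_Schwarz_ineq2[of u "\<phi> (T i \<omega>)"] phi_bnd[of "T i \<omega>"]
    by (meson mult_left_mono norm_ge_zero order_trans)
  have uPT_int: "integrable M (\<lambda>\<omega>. u \<bullet> \<phi> (T i \<omega>))" if "i < n" for i u
    using uPT_meas[OF that] uPT_bnd by (intro integrable_const_bound[where B="norm u * (BK*BP)"]) auto
  have uzeta_meas[measurable]: "(\<lambda>\<omega>. u \<bullet> \<zeta> \<omega>) \<in> borel_measurable M" for u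
    unfolding uzeta by (intro borel_measurable_sum borel_measurable_diff uPT_meas) auto
  have uzeta_mean: "expectation (\<lambda>\<omega>. u \<bullet> \<zeta> \<omega>) = 0" for u
  proof -
    have "expectation (\<lambda>\<omega>. u \<bullet> \<zeta> \<omega>) = (\<Sum>i<n. expectation (\<lambda>\<omega>. u \<bullet> \<phi> (T i \<omega>) - expectation (\<lambda>\<omega>'. u \<bullet> \<phi> (T i \<omega>'))))"
      unfolding uzeta by (rule Bochner_Integration.integral_sum) (use uPT_int in auto)
    also have "\<dots> = 0" using uPT_int by (simp add: prob_space)
    finally show ?thesis .
  qed
  have uzeta_bnd: "\<bar>u \<bullet> \<zeta> \<omega>\<bar> \<le> n * (2 * (norm u * (BK * BP)))" for u \<omega>
  proof -
    have "\<bar>u \<bullet> \<zeta> \<omega>\<bar> \<le> (\<Sum>i<n. \<bar>u \<bullet> \<phi> (T i \<omega>) - expectation (\<lambda>\<omega>'. u \<bullet> \<phi> (T i \<omega>'))\<bar>)"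
      unfolding uzeta by (rule sum_abs)
    also have "\<dots> \<le> (\<Sum>i<n. 2 * (norm u * (BK * BP)))"
    proof (intro sum_mono)
      fix i assume "i \<in> {..<n}"
      then have "\<bar>expectation (\<lambda>\<omega>'. u \<bullet> \<phi> (T i \<omega>'))\<bar> \<le> norm u * (BK * BP)"
        using uPT_bnd by (intro abs_expectation_le uPT_meas) auto
      then show "\<bar>u \<bullet> \<phi> (T i \<omega>) - expectation (\<lambda>\<omega>'. u \<bullet> \<phi> (T i \<omega>'))\<bar> \<le> 2 * (norm u * (BK * BP))"
        using uPT_bnd[of u i \<omega>] by linarith
    qed
    finally show ?thesis by simp
  qed

  define zk where "zk k \<omega> = \<zeta> \<omega> $ k" for k \<omega>
  define Bz where "Bz (k::'p) = n * (2 * (norm (axis k (1::real) :: real^'p) * (BK * BP)))" for k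
  have zk_eq: "zk k \<omega> = axis k 1 \<bullet> \<zeta> \<omega>" for k \<omega>
    by (simp add: zk_def cart_eq_inner_axis inner_commute)
  have zk_meas[measurable]: "zk k \<in> borel_measurable M" for k
    unfolding zk_eq[abs_def] by (rule uzeta_meas)
  have zk_mean: "expectation (zk k) = 0" for k
    unfolding zk_eq[abs_def] by (rule uzeta_mean)
  have zk_bnd: "\<bar>zk k \<omega>\<bar> \<le> Bz k" for k \<omega>
    unfolding zk_eq Bz_def by (rule uzeta_bnd)
  have Bz0: "0 \<le> Bz k" for k using order_trans[OF abs_ge_zero zk_bnd] by blast
  have zk2_int: "integrable M (\<lambda>\<omega>. c1 * zk k \<omega> * (c2 * zk l \<omega>))" for k l c1 c2
  proof -
    have "\<bar>c1 * zk k \<omega> * (c2 * zk l \<omega>)\<bar> \<le> \<bar>c1\<bar> * Bz k * (\<bar>c2\<bar> * Bz l)" for \<omega>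
      unfolding abs_mult
      by (intro mult_mono zk_bnd mult_left_mono) (auto intro: order_trans[OF abs_ge_zero zk_bnd] Bz0 mult_nonneg_nonneg)
    then show ?thesis by (intro integrable_const_bound[where B="\<bar>c1\<bar> * Bz k * (\<bar>c2\<bar> * Bz l)"]) auto
  qed
  have cov_eq: "cov_mat M \<zeta> $ k $ l = expectation (\<lambda>\<omega>. zk k \<omega> * zk l \<omega>)" for k l
    using zk_mean unfolding cov_mat_def zk_def by simp
  have quad: "w \<bullet> (cov_mat M \<zeta> *v w) = expectation (\<lambda>\<omega>. (w \<bullet> \<zeta> \<omega>)\<^sup>2)"
  proof -
    have "w \<bullet> (cov_mat M \<zeta> *v w) = (\<Sum>k\<in>UNIV. \<Sum>l\<in>UNIV. expectation (\<lambda>\<omega>. w$k * zk k \<omega> * (w$l * zk l \<omega>)))"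
      by (simp add: inner_vec_def matrix_vector_mult_def cov_eq sum_distrib_left algebra_simps)
    also have "\<dots> = (\<Sum>k\<in>UNIV. expectation (\<lambda>\<omega>. \<Sum>l\<in>UNIV. w$k * zk k \<omega> * (w$l * zk l \<omega>)))"
      by (intro sum.cong refl Bochner_Integration.integral_sum[symmetric] zk2_int)
    also have "\<dots> = expectation (\<lambda>\<omega>. \<Sum>k\<in>UNIV. \<Sum>l\<in>UNIV. w$k * zk k \<omega> * (w$l * zk l \<omega>))"
      by (rule Bochner_Integration.integral_sum[where I=UNIV and f="\<lambda>k \<omega>. \<Sum>l\<in>UNIV. w$k * zk k \<omega> * (w$l * zk l \<omega>)", symmetric]) (rule Bochner_Integration.integrable_sum, rule zk2_int)
    also have "\<dots> = expectation (\<lambda>\<omega>. (w \<bullet> \<zeta> \<omega>)\<^sup>2)"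
      by (simp add: inner_vec_def power2_eq_square sum_product zk_def)
    finally show ?thesis .
  qed
  have quad1: "w \<bullet> (cov_mat M \<zeta> *v w) = 1"
  proof -
    have "S *v w = \<gamma>" unfolding w_def by (simp add: matrix_vector_mul_assoc SA(1))
    then have "w \<bullet> (cov_mat M \<zeta> *v w) = w \<bullet> (S *v \<gamma>)"
      unfolding \<zeta>_def assms(15)[symmetric] by (metis matrix_vector_mul_assoc)
    also have "\<dots> = (S *v w) \<bullet> \<gamma>" by (metis dot_lmul_matrix trS)
    also have "\<dots> = 1" using \<open>S *v w = \<gamma>\<close> assms(17) by (simp add: dot_square_norm)
    finally show ?thesis .
  qed

  obtain KA where KA: "KA > 0" "\<And>x. norm (A *v x) \<le> norm x * KA"
    using bounded_linear.pos_bounded[OF matrix_vector_mul_bounded_linear[of A]] by blast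
  have qeq: "q t = (K t * norm (A *v \<Psi> t))\<^sup>2" for t
  proof -
    have "\<Psi> t \<bullet> ((A ** A) *v \<Psi> t) = (A *v \<Psi> t) \<bullet> (A *v \<Psi> t)"
      by (metis matrix_vector_mul_assoc dot_lmul_matrix trA)
    then show ?thesis by (simp add: q_def power_mult_distrib power2_norm_eq_inner)
  qed
  have qbnd: "q t \<le> (BK * (BP * KA))\<^sup>2" if "t \<in> unit_cube" for t
  proof -
    have "norm (A *v \<Psi> t) \<le> BP * KA"
      using KA(2)[of "\<Psi> t"] BP[OF that] KA(1) by (meson mult_right_mono less_imp_le order_trans)
    then have "K t * norm (A *v \<Psi> t) \<le> BK * (BP * KA)"
      using BK[of t] assms(7)[of t] by (intro mult_mono) auto
    then show ?thesis unfolding qeq using assms(7)[of t]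
      by (intro power_mono) auto
  qed
  have bdd: "bdd_above (q ` unit_cube)"
    using qbnd by (intro bdd_aboveI2) auto
  have q_le_s: "q t \<le> s" if "t \<in> unit_cube" for t
    unfolding s_def using bdd that by (rule cSUP_upper2) simp
  have s0: "0 \<le> s" using q_le_s[OF zero_in_cube] qeq[of 0] by (smt (verit) zero_le_power2)
  have b00: "0 \<le> b0" unfolding b0_def using s0 by simp
  have wphi: "\<bar>w \<bullet> \<phi> t\<bar> \<le> b0" for t
  proof (cases "t \<in> unit_cube")
    case True
    have "\<bar>w \<bullet> \<phi> t\<bar> = K t * \<bar>\<gamma> \<bullet> (A *v \<Psi> t)\<bar>"
      using assms(7)[of t] by (simp add: \<phi>_def gA abs_mult)
    also have "\<dots> \<le> K t * norm (A *v \<Psi> t)"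
      using Cauchy_Schwarz_ineq2[of \<gamma> "A *v \<Psi> t"] assms(17) assms(7)[of t]
      by (intro mult_left_mono) auto
    finally have "\<bar>w \<bullet> \<phi> t\<bar>\<^sup>2 \<le> (K t * norm (A *v \<Psi> t))\<^sup>2"
      by (intro power_mono) auto
    also have "\<dots> \<le> s" using q_le_s[OF True] qeq[of t] by simp
    finally show ?thesis unfolding b0_def by (rule real_le_rsqrt)
  next
    case False
    then show ?thesis using b00 assms(9)[OF False] by (simp add: \<phi>_def)
  qed
  define c where "c i = expectation (\<lambda>\<omega>. w \<bullet> \<phi> (T i \<omega>))" for i
  define Z where "Z i \<omega> = w \<bullet> \<phi> (T i \<omega>) - c i" for i \<omega>
  have sumZ: "\<gamma> \<bullet> (A *v \<zeta> \<omega>) = (\<Sum>i<n. Z i \<omega>)" for \<omega>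
    unfolding gA uzeta Z_def c_def ..
  have c_bnd: "\<bar>c i\<bar> \<le> b0" if "i < n" for i
    unfolding c_def using wphi by (intro abs_expectation_le uPT_meas that)
  have Z_bnd: "\<bar>Z i \<omega>\<bar> \<le> 2 * b0" if "i < n" for i \<omega>
    using c_bnd[OF that] wphi[of "T i \<omega>"] unfolding Z_def by linarith
  have Z_mean: "expectation (Z i) = 0" if "i < n" for i
    unfolding Z_def[abs_def] c_def using uPT_int[OF that] by (simp add: prob_space)
  have Z_indep: "indep_vars (\<lambda>_. borel) Z {..<n}"
  proof -
    have "indep_vars (\<lambda>_. borel) (\<lambda>i \<omega>. (\<lambda>x. w \<bullet> \<phi> ((1/h) *\<^sub>R (x - x0)) - c i) (X i \<omega>)) {..<n}"
      by (rule indep_vars_compose2[OF assms(4)]) measurable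
    then show ?thesis unfolding Z_def[abs_def] T_def by simp
  qed
  have var: "(\<Sum>i<n. expectation (\<lambda>\<omega>. (Z i \<omega>)\<^sup>2)) = 1"
  proof -
    have "(\<Sum>i<n. expectation (\<lambda>\<omega>. (Z i \<omega>)\<^sup>2)) = expectation (\<lambda>\<omega>. (\<Sum>i<n. Z i \<omega>)\<^sup>2)"
      by (rule var_sum[symmetric, OF Z_indep Z_bnd Z_mean])
    also have "\<dots> = expectation (\<lambda>\<omega>. (w \<bullet> \<zeta> \<omega>)\<^sup>2)"
      using sumZ gA by simp
    also have "\<dots> = 1" using quad quad1 by simp
    finally show ?thesis .
  qed
  have p1: "1 \<le> real CARD('p)" by simp
  have main: "ln (expectation (\<lambda>\<omega>. exp (lam * (\<Sum>i<n. Z i \<omega>)))) \<le> (real CARD('p) + 16 * g * (n * b0 ^ 3)) * lam\<^sup>2 / 2"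
    by (rule mgf_bound[OF Z_indep Z_bnd Z_mean _ b00 assms(18) p1]) (use var in simp_all)
  have lhs: "(\<lambda>\<omega>. exp (lam * (\<gamma> \<bullet> (matrix_inv S *v score_centered M n h x0 K \<Psi> X \<omega>)))) = (\<lambda>\<omega>. exp (lam * (\<Sum>i<n. Z i \<omega>)))"
    using sumZ unfolding A_def \<zeta>_def by simp
  have sup: "(SUP t\<in>unit_cube. (K t)\<^sup>2 * (\<Psi> t \<bullet> ((matrix_inv S ** matrix_inv S) *v \<Psi> t))) = s"
    unfolding s_def q_def A_def ..
  have rhs: "sqrt (real n * h ^ CARD('d) * s) ^ 3 / sqrt (real n * h ^ (3 * CARD('d))) = n * b0 ^ 3"
  proof -
    define a where "a = sqrt (real n)"
    define bb where "bb = sqrt (h ^ CARD('d))"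
    have a0: "a > 0" unfolding a_def using assms(2) by simp
    have bb0: "bb > 0" unfolding bb_def using assms(3) by simp
    have e1: "sqrt (real n * h ^ CARD('d) * s) = a * bb * b0"
      unfolding a_def bb_def b0_def by (simp add: real_sqrt_mult)
    have "h ^ (3 * CARD('d)) = (h ^ CARD('d)) ^ 3" by (simp add: power_mult[symmetric] mult.commute)
    then have e2: "sqrt (real n * h ^ (3 * CARD('d))) = a * bb ^ 3"
      unfolding a_def bb_def by (simp add: real_sqrt_mult real_sqrt_power)
    have an: "a ^ 2 = real n" unfolding a_def by simp
    have "(a * bb * b0) ^ 3 / (a * bb ^ 3) = a ^ 2 * b0 ^ 3"
      using a0 bb0 by (simp add: field_simps eval_nat_numeral)
    then show ?thesis unfolding e1 e2 an .
  qed
  have rhs': "16 * g * sqrt (real n * h ^ CARD('d) * s) ^ 3 / sqrt (real n * h ^ (3 * CARD('d))) = 16 * g * (n * b0 ^ 3)"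
    using rhs by (simp add: times_divide_eq_right[symmetric])
  show ?thesis unfolding lhs sup rhs' using main .
qed


end
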